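(* Let $n,c,s,p$ and $n_1,\dots,n_c$ be positive integers with $n_1\ge 2p$, $n_1\ge n_2\ge\cdots\ge n_c\ge p$ and $n_1+n_2+\cdots+n_c=n-s$. Then $$\lambda_1\big(D(K_s\vee(K_{n_1}+K_{n_2}+\cdots+K_{n_c}))\big)\ge \lambda_1\big(D(K_s\vee(K_{n-s-p(c-1)}+(c-1)K_p))\big),$$ with equality if and only if $(n_1,n_2,\dots,n_c)=(n-s-p(c-1),p,\dots,p)$.
   Context: For a connected graph $G$, $D(G)$ is the distance matrix and $\lambda_1(D(G))$ its largest eigenvalue (distance spectral radius). $K_m$ is the complete graph on $m$ vertices, $+$ denotes disjoint union, $(c-1)K_p$ is $c-1$ disjoint copies of $K_p$, and $G_1\vee G_2$ is the join of $G_1$ and $G_2$ (disjoint union plus all edges between them). *)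

theory Defs
  imports "Jordan_Normal_Form.Char_Poly"
begin

text \<open>A finite simple graph on the vertex set {0..<n}, given by its number of
  vertices and a symmetric irreflexive adjacency relation on {0..<n}.\<close>
type_synonym sgraph = "nat \<times> (nat \<Rightarrow> nat \<Rightarrow> bool)"

definition complete_graph :: "nat \<Rightarrow> sgraph" where
  "complete_graph m = (m, \<lambda>i j. i < m \<and> j < m \<and> i \<noteq> j)"

definition gunion :: "sgraph \<Rightarrow> sgraph \<Rightarrow> sgraph" where
  "gunion G H = (fst G + fst H,
     \<lambda>i j. (i < fst G \<and> j < fst G \<and> snd G i j) \<or>
           (fst G \<le> i \<and> fst G \<le> j \<and> snd H (i - fst G) (j - fst G)))"

definition gjoin :: "sgraph \<Rightarrow> sgraph \<Rightarrow> sgraph" where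
  "gjoin G H = (fst G + fst H,
     \<lambda>i j. snd (gunion G H) i j \<or>
           (i < fst G \<and> fst G \<le> j \<and> j < fst G + fst H) \<or>
           (j < fst G \<and> fst G \<le> i \<and> i < fst G + fst H))"

definition empty_graph :: sgraph where
  "empty_graph = (0, \<lambda>_ _. False)"

definition union_cliques :: "nat list \<Rightarrow> sgraph" where
  "union_cliques ns = foldr (\<lambda>m G. gunion (complete_graph m) G) ns empty_graph"

fun walk :: "sgraph \<Rightarrow> nat \<Rightarrow> nat \<Rightarrow> nat \<Rightarrow> bool" where
  "walk G 0 u v = (u = v \<and> u < fst G)"
| "walk G (Suc k) u v = (\<exists>w. u < fst G \<and> snd G u w \<and> walk G k w v)"

text \<open>Graph distance (length of a shortest walk); meaningful for connected graphs.\<close>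
definition gdist :: "sgraph \<Rightarrow> nat \<Rightarrow> nat \<Rightarrow> nat" where
  "gdist G u v = (LEAST k. walk G k u v)"

definition distance_matrix :: "sgraph \<Rightarrow> real mat" where
  "distance_matrix G = mat (fst G) (fst G) (\<lambda>(i, j). real (gdist G i j))"

definition largest_eigenvalue :: "real mat \<Rightarrow> real" where
  "largest_eigenvalue A = Max {k. eigenvalue A k}"

end

theory Submission
  imports Defs
begin


lemma perron_max:
  fixes d :: "nat \<Rightarrow> nat \<Rightarrow> real" and x :: "nat \<Rightarrow> real"
  assumes N: "N > 0"
    and sym: "\<And>i j. i < N \<Longrightarrow> j < N \<Longrightarrow> d i j = d j i"
    and nn: "\<And>i j. i < N \<Longrightarrow> j < N \<Longrightarrow> d i j \<ge> 0"
    and xp: "\<And>i. i < N \<Longrightarrow> x i > 0"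
    and eig: "\<And>i. i < N \<Longrightarrow> (\<Sum>j<N. d i j * x j) = lam * x i"
    and lam: "lam \<ge> 0"
  shows "largest_eigenvalue (mat N N (\<lambda>(i,j). d i j)) = lam"
proof -
  define A where "A = mat N N (\<lambda>(i,j). d i j)"
  have Ac: "A \<in> carrier_mat N N" unfolding A_def by simp
  have mv: "(A *\<^sub>v v) $ i = (\<Sum>j<N. d i j * v $ j)" if "i < N" "dim_vec v = N" for v i
    using that unfolding A_def by (simp add: scalar_prod_def lessThan_atLeast0)
  have fin: "finite {k. eigenvalue A k}"
  proof -
    have "char_poly A \<noteq> 0" using degree_monic_char_poly[OF Ac] by auto
    hence "finite {k. poly (char_poly A) k = 0}" by (rule poly_roots_finite)
    thus ?thesis using eigenvalue_root_char_poly[OF Ac] by simp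
  qed
  have ev: "eigenvalue A lam"
    unfolding eigenvalue_def eigenvector_def
  proof (intro exI conjI)
    show "vec N x \<in> carrier_vec (dim_row A)" using Ac by auto
    show "vec N x \<noteq> 0\<^sub>v (dim_row A)"
    proof
      assume "vec N x = 0\<^sub>v (dim_row A)"
      hence "vec N x $ 0 = 0\<^sub>v (dim_row A) $ 0" by simp
      thus False using N xp[of 0] Ac by auto
    qed
    show "A *\<^sub>v vec N x = lam \<cdot>\<^sub>v vec N x"
    proof (rule eq_vecI)
      fix i assume "i < dim_vec (lam \<cdot>\<^sub>v vec N x)"
      hence i: "i < N" by simp
      show "(A *\<^sub>v vec N x) $ i = (lam \<cdot>\<^sub>v vec N x) $ i"
        using mv[of i "vec N x"] i eig[OF i] by simp
    qed (use Ac in simp)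
  qed
  have bd: "mu \<le> lam" if "eigenvalue A mu" for mu
  proof (cases "mu < 0")
    case True thus ?thesis using lam by simp
  next
    case False
    from that obtain v where v: "v \<in> carrier_vec N" "v \<noteq> 0\<^sub>v N" "A *\<^sub>v v = mu \<cdot>\<^sub>v v"
      unfolding eigenvalue_def eigenvector_def using Ac by auto
    have dv: "dim_vec v = N" using v by auto
    have ineq: "mu * \<bar>v $ i\<bar> \<le> (\<Sum>j<N. d i j * \<bar>v $ j\<bar>)" if i: "i < N" for i
    proof -
      have "mu * v $ i = (A *\<^sub>v v) $ i" using v(3) i dv by simp
      also have "\<dots> = (\<Sum>j<N. d i j * v $ j)" using mv i dv by simp
      finally have "mu * \<bar>v $ i\<bar> = \<bar>\<Sum>j<N. d i j * v $ j\<bar>" using False by (metis abs_mult abs_of_nonneg not_less)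
      also have "\<dots> \<le> (\<Sum>j<N. \<bar>d i j * v $ j\<bar>)" by (rule sum_abs)
      also have "\<dots> = (\<Sum>j<N. d i j * \<bar>v $ j\<bar>)" using nn i by (intro sum.cong) (auto simp: abs_mult)
      finally show ?thesis .
    qed
    have "(\<Sum>i<N. x i * (mu * \<bar>v $ i\<bar>)) \<le> (\<Sum>i<N. x i * (\<Sum>j<N. d i j * \<bar>v $ j\<bar>))"
      using ineq xp by (intro sum_mono mult_left_mono) (auto intro: less_imp_le)
    also have "\<dots> = (\<Sum>i<N. \<Sum>j<N. x i * d i j * \<bar>v $ j\<bar>)"
      by (simp add: sum_distrib_left mult.assoc)
    also have "\<dots> = (\<Sum>j<N. \<Sum>i<N. x i * d i j * \<bar>v $ j\<bar>)"
      by (rule sum.swap)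
    also have "\<dots> = (\<Sum>j<N. \<bar>v $ j\<bar> * (\<Sum>i<N. d j i * x i))"
      unfolding sum_distrib_left by (intro sum.cong refl) (simp add: sym mult_ac)
    also have "\<dots> = (\<Sum>j<N. \<bar>v $ j\<bar> * (lam * x j))" by (simp add: eig)
    finally have le: "mu * (\<Sum>i<N. x i * \<bar>v $ i\<bar>) \<le> lam * (\<Sum>i<N. x i * \<bar>v $ i\<bar>)"
      by (simp add: sum_distrib_left mult_ac)
    obtain k where k: "k < N" "v $ k \<noteq> 0"
      using v(2) dv by (metis eq_vecI index_zero_vec(1) index_zero_vec(2))
    have "0 < x k * \<bar>v $ k\<bar>" using xp[OF k(1)] k(2) by simp
    also have "\<dots> \<le> (\<Sum>i<N. x i * \<bar>v $ i\<bar>)"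
      using k(1) xp by (intro member_le_sum) (auto simp: less_imp_le)
    finally have "0 < (\<Sum>i<N. x i * \<bar>v $ i\<bar>)" .
    with le show ?thesis by simp
  qed
  show ?thesis unfolding largest_eigenvalue_def A_def[symmetric]
    by (rule Max_eqI[OF fin]) (use bd ev in auto)
qed




fun blk :: "nat list \<Rightarrow> nat \<Rightarrow> nat" where
  "blk [] i = 0"
| "blk (m # ms) i = (if i < m then 0 else Suc (blk ms (i - m)))"

lemma sum_split_add: "(\<Sum>t<m+k. f t) = (\<Sum>t<m. f t) + (\<Sum>t<k. f (m+t))"
  for f :: "nat \<Rightarrow> 'a::comm_monoid_add"
  by (induction k) (auto simp: add_ac)

lemma uc_fst: "fst (union_cliques ns) = sum_list ns"
  by (induction ns) (auto simp: union_cliques_def gunion_def complete_graph_def empty_graph_def)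

lemma uc_snd: "snd (union_cliques ns) i j \<longleftrightarrow>
   i < sum_list ns \<and> j < sum_list ns \<and> i \<noteq> j \<and> blk ns i = blk ns j"
proof (induction ns arbitrary: i j)
  case Nil thus ?case by (simp add: union_cliques_def empty_graph_def)
next
  case (Cons m ms)
  have u: "union_cliques (m # ms) = gunion (complete_graph m) (union_cliques ms)"
    by (simp add: union_cliques_def)
  show ?case unfolding u gunion_def using Cons[of "i - m" "j - m"]
    by (auto simp: complete_graph_def uc_fst)
qed

lemma blk_lt: "i < sum_list ns \<Longrightarrow> blk ns i < length ns"
  by (induction ns arbitrary: i) auto

lemma blk_sum: "(\<Sum>t<sum_list ns. f (blk ns t)) = (\<Sum>k<length ns. real (ns ! k) * f k)"
proof (induction ns arbitrary: f)
  case Nil thus ?case by simp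
next
  case (Cons m ms)
  have "(\<Sum>t<sum_list (m # ms). f (blk (m # ms) t)) =
        (\<Sum>t<m. f (blk (m # ms) t)) + (\<Sum>t<sum_list ms. f (blk (m # ms) (m + t)))"
    by (simp add: sum_split_add)
  also have "\<dots> = real m * f 0 + (\<Sum>t<sum_list ms. f (Suc (blk ms t)))" by simp
  also have "\<dots> = real m * f 0 + (\<Sum>k<length ms. real (ms ! k) * f (Suc k))"
    using Cons[of "\<lambda>k. f (Suc k)"] by simp
  also have "\<dots> = (\<Sum>k<length (m # ms). real ((m # ms) ! k) * f k)"
    by (subst length_Cons, subst sum.lessThan_Suc_shift) simp
  finally show ?case .
qed

definition GG :: "nat \<Rightarrow> nat list \<Rightarrow> sgraph" where
  "GG s ns = gjoin (complete_graph s) (union_cliques ns)"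

lemma GG_fst: "fst (GG s ns) = s + sum_list ns"
  by (simp add: GG_def gjoin_def gunion_def complete_graph_def uc_fst)

lemma GG_snd: "snd (GG s ns) i j \<longleftrightarrow> i < s + sum_list ns \<and> j < s + sum_list ns \<and> i \<noteq> j \<and>
   (i < s \<or> j < s \<or> blk ns (i - s) = blk ns (j - s))"
  unfolding GG_def gjoin_def gunion_def by (auto simp: complete_graph_def uc_fst uc_snd)

lemma walk1: "walk G (Suc 0) u v \<longleftrightarrow> u < fst G \<and> snd G u v \<and> v < fst G"
  by auto

lemma gdist_GG:
  assumes s: "s > 0" and i: "i < s + sum_list ns" and j: "j < s + sum_list ns"
  shows "gdist (GG s ns) i j = (if i = j then 0 else
           if i < s \<or> j < s \<or> blk ns (i - s) = blk ns (j - s) then 1 else 2)"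
proof -
  let ?G = "GG s ns"
  show ?thesis
  proof (cases "i = j")
    case True
    have "walk ?G 0 i j" using True i by (simp add: GG_fst)
    thus ?thesis unfolding gdist_def using True by (intro Least_equality) auto
  next
    case ne: False
    show ?thesis
    proof (cases "i < s \<or> j < s \<or> blk ns (i - s) = blk ns (j - s)")
      case True
      have w: "walk ?G (Suc 0) i j" using True i j ne by (simp add: GG_fst GG_snd)
      have "gdist ?G i j = 1" unfolding gdist_def
      proof (intro Least_equality)
        show "walk ?G 1 i j" using w by simp
        fix y assume "walk ?G y i j"
        thus "1 \<le> y" using ne by (cases y) auto
      qed
      thus ?thesis using True ne by simp
    next
      case False
      have w: "walk ?G 2 i j"
        using False i j ne s
        by (simp add: numeral_2_eq_2 GG_fst GG_snd) (rule exI[of _ 0], auto)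
      have "gdist ?G i j = 2" unfolding gdist_def
      proof (intro Least_equality)
        show "walk ?G 2 i j" using w .
        fix y assume y: "walk ?G y i j"
        show "2 \<le> y"
        proof (rule ccontr)
          assume "\<not> 2 \<le> y"
          hence "y = 0 \<or> y = Suc 0" by auto
          thus False using y ne False by (auto simp: GG_snd)
        qed
      qed
      thus ?thesis using False ne by simp
    qed
  qed
qed




definition FF :: "nat \<Rightarrow> nat list \<Rightarrow> real \<Rightarrow> real" where
  "FF s ns l = (2 + real s / (l - real s + 1)) * (\<Sum>k<length ns. real (ns ! k) / (l + real (ns ! k) + 1))"

lemma lam_GG:
  assumes s: "s > 0" and l: "l > real s - 1" and F: "FF s ns l = 1"
  shows "largest_eigenvalue (distance_matrix (GG s ns)) = l"
proof -
  define S where "S = sum_list ns"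
  define N where "N = s + S"
  define d where "d i j = real (gdist (GG s ns) i j)" for i j
  define a where "a = 1 / (l - real s + 1)"
  define y where "y k = (real s * a + 2) / (l + real (ns ! k) + 1)" for k
  define x where "x i = (if i < s then a else y (blk ns (i - s)))" for i
  have lp: "l - real s + 1 > 0" using l by simp
  have a0: "a > 0" using lp by (simp add: a_def)
  have y0: "y k > 0" for k
  proof -
    have "l + real (ns ! k) + 1 > 0" using l by simp
    moreover have "real s * a + 2 > 0" using a0 by (simp add: add_nonneg_pos)
    ultimately show ?thesis by (simp add: y_def)
  qed
  have yeq: "y k * (l + real (ns ! k) + 1) = real s * a + 2" for k
    using l unfolding y_def by (simp add: field_simps)
  have aeq: "a * (l - real s + 1) = 1" using lp by (simp add: a_def)
  have dform: "d i j = (if i = j then 0 else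
           if i < s \<or> j < s \<or> blk ns (i - s) = blk ns (j - s) then 1 else 2)"
    if "i < N" "j < N" for i j
    using gdist_GG[OF s, of i ns j] that by (simp add: d_def N_def S_def)
  define T where "T = (\<Sum>k<length ns. real (ns ! k) * y k)"
  have T1: "T = 1"
  proof -
    have "T = (real s * a + 2) * (\<Sum>k<length ns. real (ns ! k) / (l + real (ns ! k) + 1))"
      unfolding T_def y_def sum_distrib_left by (intro sum.cong) auto
    also have "\<dots> = FF s ns l" unfolding FF_def a_def by simp
    finally show ?thesis using F by simp
  qed
  have split: "(\<Sum>j<N. f j) = (\<Sum>j<s. f j) + (\<Sum>t<S. f (s + t))" for f :: "nat \<Rightarrow> real"
    unfolding N_def by (rule sum_split_add)
  have eig: "(\<Sum>j<N. d i j * x j) = l * x i" if i: "i < N" for i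
  proof (cases "i < s")
    case True
    have "(\<Sum>j<s. d i j * x j) = (\<Sum>j<s. a - (if j = i then a else 0))"
      using True by (intro sum.cong) (auto simp: dform N_def x_def)
    also have "\<dots> = real s * a - a" using True by (simp add: sum_subtractf)
    finally have 1: "(\<Sum>j<s. d i j * x j) = real s * a - a" .
    have "(\<Sum>t<S. d i (s + t) * x (s + t)) = (\<Sum>t<sum_list ns. y (blk ns t))"
      using True by (intro sum.cong) (auto simp: dform N_def x_def S_def)
    also have "\<dots> = T" unfolding blk_sum T_def ..
    finally have 2: "(\<Sum>t<S. d i (s + t) * x (s + t)) = T" .
    show ?thesis unfolding split 1 2 T1 using True aeq
      by (simp add: x_def algebra_simps)
  next
    case False
    define t' where "t' = i - s"
    have it: "i = s + t'" and t': "t' < S" using False i by (auto simp: t'_def N_def)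
    define b where "b = blk ns t'"
    have bl: "b < length ns" using blk_lt t' by (simp add: b_def S_def)
    define g where "g k = (if k = b then 1 else 2) * y k" for k
    have "(\<Sum>j<s. d i j * x j) = (\<Sum>j<s. a)"
      using False i by (intro sum.cong) (auto simp: dform N_def x_def)
    hence 1: "(\<Sum>j<s. d i j * x j) = real s * a" by simp
    have "(\<Sum>t<S. d i (s + t) * x (s + t)) = (\<Sum>t<S. g (blk ns t) - (if t = t' then y b else 0))"
      using t' by (intro sum.cong) (auto simp: dform N_def x_def it g_def b_def)
    also have "\<dots> = (\<Sum>t<sum_list ns. g (blk ns t)) - y b"
      using t' by (simp add: sum_subtractf S_def)
    also have "(\<Sum>t<sum_list ns. g (blk ns t)) = (\<Sum>k<length ns. real (ns ! k) * g k)"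
      by (rule blk_sum)
    also have "\<dots> = (\<Sum>k<length ns. 2 * (real (ns ! k) * y k) - (if k = b then real (ns ! k) * y k else 0))"
      by (intro sum.cong) (auto simp: g_def)
    also have "\<dots> = 2 * T - real (ns ! b) * y b"
      using bl by (simp add: sum_subtractf T_def sum_distrib_left)
    finally have 2: "(\<Sum>t<S. d i (s + t) * x (s + t)) = 2 * T - real (ns ! b) * y b - y b" .
    have xi: "x i = y b" using False by (simp add: x_def b_def t'_def)
    show ?thesis unfolding split 1 2 T1 xi using yeq[of b]
      by (simp add: algebra_simps)
  qed
  have "largest_eigenvalue (mat N N (\<lambda>(i,j). d i j)) = l"
  proof (rule perron_max)
    show "0 < N" using s by (simp add: N_def)
    show "d i j = d j i" if "i < N" "j < N" for i j using that by (auto simp: dform)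
    show "0 \<le> d i j" for i j by (simp add: d_def)
    show "0 < x i" for i using a0 y0 by (simp add: x_def)
    show "(\<Sum>j<N. d i j * x j) = l * x i" if "i < N" for i using eig that .
    show "0 \<le> l" using l s by simp
  qed
  moreover have "distance_matrix (GG s ns) = mat N N (\<lambda>(i,j). d i j)"
    unfolding distance_matrix_def GG_fst N_def S_def d_def ..
  ultimately show ?thesis by simp
qed




lemma FF_cont: "l > real s - 1 \<Longrightarrow> isCont (FF s ns) l"
  unfolding FF_def by (intro continuous_intros) auto

lemma FF_lo:
  assumes s: "s > 0" and ne: "ns \<noteq> []" and p0: "ns ! 0 > 0"
  defines "lo \<equiv> real s - 1 + real s / (2 * (real s + 2))"
  shows "FF s ns lo \<ge> 1"
proof -
  define \<delta> where "\<delta> = real s / (2 * (real s + 2))"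
  have d0: "\<delta> > 0" and d1: "\<delta> \<le> 1" using s by (auto simp: \<delta>_def field_simps)
  have lo: "lo = real s - 1 + \<delta>" unfolding lo_def \<delta>_def ..
  have h1: "real (ns ! 0) / (lo + real (ns ! 0) + 1) \<ge> 1 / (lo + 2)"
  proof -
    have "lo \<ge> 0" using lo d0 s by simp
    moreover have n1: "real (ns ! 0) \<ge> 1" using p0 by simp
    ultimately have "real (ns ! 0) * lo \<ge> lo" by (metis mult_right_mono mult_1)
    hence "lo + real (ns ! 0) + 1 \<le> real (ns ! 0) * (lo + 2)" using n1 by (simp add: algebra_simps)
    thus ?thesis using \<open>lo \<ge> 0\<close> by (simp add: divide_simps)
  qed
  have "(\<Sum>k<length ns. real (ns ! k) / (lo + real (ns ! k) + 1)) \<ge> real (ns ! 0) / (lo + real (ns ! 0) + 1)"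
    using ne lo d0 s by (intro member_le_sum) (auto intro!: divide_nonneg_pos)
  hence B: "(\<Sum>k<length ns. real (ns ! k) / (lo + real (ns ! k) + 1)) \<ge> 1 / (real s + 2)"
  proof -
    have "1 / (real s + 2) \<le> 1 / (lo + 2)" using lo d1 d0 s by (intro divide_left_mono) auto
    thus ?thesis using h1 \<open>(\<Sum>k<length ns. _) \<ge> _\<close> by linarith
  qed
  have A: "2 + real s / (lo - real s + 1) \<ge> real s / \<delta>" using lo d0 by simp
  have "real s / \<delta> = 2 * (real s + 2)" using s by (simp add: \<delta>_def)
  hence "FF s ns lo \<ge> 2 * (real s + 2) * (1 / (real s + 2))"
    unfolding FF_def using A B by (intro mult_mono) auto
  moreover have "2 * (real s + 2) * (1 / (real s + 2)) = 2"
  proof -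
    have "real s + 2 \<noteq> 0" by simp
    hence "2 * (real s + 2) / (real s + 2) = 2" by (rule nonzero_mult_div_cancel_right)
    thus ?thesis by simp
  qed
  ultimately show ?thesis by linarith
qed

lemma FF_hi:
  assumes s: "s > 0" and m: "sum_list ns > 0"
  defines "hi \<equiv> 3 * real (sum_list ns) + 2 * real s + 2"
  shows "FF s ns hi \<le> 1"
proof -
  define m where "m = real (sum_list ns)"
  have m0: "m > 0" using m by (simp add: m_def)
  have "(\<Sum>k<length ns. real (ns ! k) / (hi + real (ns ! k) + 1)) \<le> (\<Sum>k<length ns. real (ns ! k) / (hi + 1))"
    using m0 by (intro sum_mono divide_left_mono) (auto simp: hi_def m_def)
  also have "\<dots> = m / (hi + 1)"
    by (simp add: m_def sum_divide_distrib[symmetric] sum_list_sum_nth atLeast0LessThan)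
  also have "\<dots> \<le> 1 / 3" using m0 by (simp add: hi_def m_def[symmetric] field_simps)
  finally have B: "(\<Sum>k<length ns. real (ns ! k) / (hi + real (ns ! k) + 1)) \<le> 1 / 3" .
  have A: "2 + real s / (hi - real s + 1) \<le> 3" using m0 by (simp add: hi_def m_def[symmetric] field_simps)
  have "FF s ns hi \<le> 3 * (1/3)" unfolding FF_def
    using A B by (intro mult_mono) (auto simp: hi_def intro!: sum_nonneg divide_nonneg_pos add_pos_nonneg)
  thus ?thesis by simp
qed

lemma FF_root:
  assumes s: "s > 0" and ne: "ns \<noteq> []" and p0: "ns ! 0 > 0"
  shows "\<exists>l. l > real s - 1 \<and> FF s ns l = 1"
proof -
  define lo where "lo = real s - 1 + real s / (2 * (real s + 2))"
  define hi where "hi = 3 * real (sum_list ns) + 2 * real s + 2"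
  have m: "sum_list ns > 0" using ne p0 by (cases ns) auto
  have lo1: "lo > real s - 1" using s by (simp add: lo_def)
  have lohi: "lo \<le> hi" using s unfolding lo_def hi_def by (simp add: field_simps)
  obtain l where l: "lo \<le> l" "l \<le> hi" "FF s ns l = 1"
    using IVT2[of "FF s ns" hi 1 lo] FF_lo[OF s ne p0] FF_hi[OF s m] lohi lo1 FF_cont
    unfolding lo_def hi_def by force
  show ?thesis using lo1 l by (intro exI[of _ l]) auto
qed

lemma FF_strict_mono:
  assumes s: "s > 0" and "real s - 1 < l1" "l1 < l2" and ne: "ns \<noteq> []" and p0: "ns ! 0 > 0"
  shows "FF s ns l2 < FF s ns l1"
proof -
  define B where "B l = (\<Sum>k<length ns. real (ns ! k) / (l + real (ns ! k) + 1))" for l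
  have Bpos: "B l2 > 0"
  proof -
    have "B l2 \<ge> real (ns ! 0) / (l2 + real (ns ! 0) + 1)" unfolding B_def
      using ne assms by (intro member_le_sum) (auto intro!: divide_nonneg_pos)
    moreover have "real (ns ! 0) / (l2 + real (ns ! 0) + 1) > 0" using p0 assms by simp
    ultimately show ?thesis by simp
  qed
  have Bmono: "B l2 \<le> B l1" unfolding B_def
    using assms by (intro sum_mono divide_left_mono) auto
  have A: "2 + real s / (l2 - real s + 1) < 2 + real s / (l1 - real s + 1) \<or> s = 0"
    using assms by (auto intro!: divide_strict_left_mono)
  have A0: "2 + real s / (l2 - real s + 1) > 0" using assms by (auto intro!: add_pos_nonneg)
  have "FF s ns l2 = (2 + real s / (l2 - real s + 1)) * B l2" unfolding FF_def B_def ..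
  also have "\<dots> < (2 + real s / (l1 - real s + 1)) * B l1"
    using A
  proof
    assume A: "2 + real s / (l2 - real s + 1) < 2 + real s / (l1 - real s + 1)"
    have "0 \<le> 2 + real s / (l1 - real s + 1)" using A A0 by simp
    hence "(2 + real s / (l1 - real s + 1)) * B l2 \<le> (2 + real s / (l1 - real s + 1)) * B l1"
      by (rule mult_left_mono[OF Bmono])
    thus ?thesis using mult_strict_right_mono[OF A Bpos] by simp
  next
    assume "s = 0"
    thus ?thesis using s by simp
  qed
  also have "\<dots> = FF s ns l1" unfolding FF_def B_def ..
  finally show ?thesis .
qed




lemma chord_id:
  fixes L p t M :: real
  assumes "L \<ge> 0" "p \<ge> 0" "t \<ge> 0" "M \<ge> 0"
  shows "t / (L + t + 1) - p / (L + p + 1) - (t - p) * ((L + 1) / ((L + M + 1) * (L + p + 1)))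
       = (t - p) * (L + 1) * (M - t) / ((L + p + 1) * (L + t + 1) * (L + M + 1))"
proof -
  define A where "A = L + t + 1"
  define B where "B = L + p + 1"
  define C where "C = L + M + 1"
  have A: "A \<noteq> 0" and B: "B \<noteq> 0" and C: "C \<noteq> 0" using assms by (auto simp: A_def B_def C_def)
  have p1: "t * B - p * A = (t - p) * (L + 1)" by (simp add: A_def B_def algebra_simps)
  have p2: "C - A = M - t" by (simp add: A_def C_def)
  have e1: "t / A - p / B = (t * B - p * A) / (A * B)" using A B by (rule diff_frac_eq)
  have e2: "1 / (A * B) - 1 / (C * B) = (C - A) / (A * B * C)" using A B C
    by (simp add: field_simps)
  have "t / A - p / B - (t - p) * ((L + 1) / (C * B)) = (t - p) * (L + 1) * (1 / (A * B) - 1 / (C * B))"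
    unfolding e1 p1 by (simp only: times_divide_eq_right right_diff_distrib mult_1_right mult.assoc)
  also have "\<dots> = (t - p) * (L + 1) * (M - t) / (B * A * C)"
    unfolding e2 p2 by (simp add: mult_ac)
  finally show ?thesis by (simp add: A_def B_def C_def)
qed

lemma chord_ge:
  fixes L p t M :: real
  assumes "L \<ge> 0" "p \<ge> 0" "p \<le> t" "t \<le> M"
  shows "t / (L + t + 1) \<ge> p / (L + p + 1) + (t - p) * ((L + 1) / ((L + M + 1) * (L + p + 1)))"
proof -
  have "(t - p) * (L + 1) * (M - t) / ((L + p + 1) * (L + t + 1) * (L + M + 1)) \<ge> 0"
    using assms by (intro divide_nonneg_pos mult_nonneg_nonneg) auto
  moreover have "t \<ge> 0" "M \<ge> 0" using assms by linarith+
  ultimately show ?thesis using chord_id[of L p t M] assms by linarith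
qed

lemma chord_gt:
  fixes L p t M :: real
  assumes "L \<ge> 0" "p \<ge> 0" "p < t" "t < M"
  shows "t / (L + t + 1) > p / (L + p + 1) + (t - p) * ((L + 1) / ((L + M + 1) * (L + p + 1)))"
proof -
  have "(t - p) * (L + 1) * (M - t) / ((L + p + 1) * (L + t + 1) * (L + M + 1)) > 0"
    using assms by (intro divide_pos_pos mult_pos_pos) auto
  moreover have "t \<ge> 0" "M \<ge> 0" using assms by linarith+
  ultimately show ?thesis using chord_id[of L p t M] assms by linarith
qed

lemma chord_eq:
  fixes L p M :: real
  assumes "L \<ge> 0" "p \<ge> 0" "M \<ge> 0"
  shows "M / (L + M + 1) = p / (L + p + 1) + (M - p) * ((L + 1) / ((L + M + 1) * (L + p + 1)))"
  using chord_id[OF assms(1) assms(2) assms(3) assms(3)] by simp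


theorem lemma3p1:
  fixes n c s p :: nat and ns :: "nat list"
  assumes "n > 0" "c > 0" "s > 0" "p > 0"
    and "length ns = c"
    and "\<forall>i < c. ns ! i > 0"
    and "ns ! 0 \<ge> 2 * p"
    and "\<forall>i j. i \<le> j \<longrightarrow> j < c \<longrightarrow> ns ! j \<le> ns ! i"
    and "ns ! (c - 1) \<ge> p"
    and "sum_list ns = n - s"
  shows "largest_eigenvalue (distance_matrix (gjoin (complete_graph s) (union_cliques ns)))
           \<ge> largest_eigenvalue (distance_matrix (gjoin (complete_graph s)
                (union_cliques ((n - s - p * (c - 1)) # replicate (c - 1) p))))
    \<and> (largest_eigenvalue (distance_matrix (gjoin (complete_graph s) (union_cliques ns)))
           = largest_eigenvalue (distance_matrix (gjoin (complete_graph s)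
                (union_cliques ((n - s - p * (c - 1)) # replicate (c - 1) p))))
       \<longleftrightarrow> ns = (n - s - p * (c - 1)) # replicate (c - 1) p)"
proof -
  note len = assms(5) and srt = assms(8)
  have s0: "s > 0" and p0: "p > 0" and c0: "c > 0" using assms by auto
  define S where "S = n - s"
  define N where "N = n - s - p * (c - 1)"
  define ns' where "ns' = N # replicate (c - 1) p"
  obtain c' where c': "c = Suc c'" using c0 by (cases c) auto
  have gep: "p \<le> ns ! k" if "k < c" for k
  proof -
    have "c - 1 < c" "k \<le> c - 1" using c0 that by auto
    hence "ns ! (c - 1) \<le> ns ! k" using srt by blast
    thus ?thesis using assms(9) by linarith
  qed
  have sumS: "real S = (\<Sum>k<c. real (ns ! k))"
  proof -
    have "S = (\<Sum>k<c. ns ! k)" using assms(10) len by (simp add: S_def sum_list_sum_nth atLeast0LessThan)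
    thus ?thesis by (simp add: of_nat_sum)
  qed
  define R where "R = (\<Sum>k<c. real (ns ! k) - real p)"
  have R: "R = real S - real c * real p" unfolding R_def sumS by (simp add: sum_subtractf)
  have Rsub: "R \<ge> (\<Sum>k\<in>J. real (ns ! k) - real p)" if "J \<subseteq> {..<c}" for J
    unfolding R_def using that gep by (intro sum_mono2) auto
  have pc: "p * (c - 1) \<le> S"
  proof -
    have "R \<ge> 0" using Rsub[of "{}"] by simp
    hence "real p * real c \<le> real S" using R by (simp add: algebra_simps)
    hence "p * c \<le> S" by (simp del: of_nat_mult add: of_nat_mult[symmetric])
    thus ?thesis using c' by simp
  qed
  have NR: "real N = real S - real (c - 1) * real p"
    using pc unfolding N_def S_def[symmetric] by (simp add: of_nat_diff)
  have bnd: "real (ns ! k) \<le> real N" if "k < c" for k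
  proof -
    have "R \<ge> real (ns ! k) - real p" using Rsub[of "{k}"] that by simp
    thus ?thesis using NR R c' by (simp add: algebra_simps)
  qed
  have N2p: "real N \<ge> 2 * real p" using bnd[of 0] c0 assms(7) by simp
  hence Npos: "N > 0" using p0 by simp
  have ne: "ns \<noteq> []" using len c0 by auto
  obtain lG where lG: "lG > real s - 1" "FF s ns lG = 1"
    using FF_root[OF s0 ne] assms(6) c0 by auto
  have ne': "ns' \<noteq> []" and p0': "ns' ! 0 > 0" using Npos by (auto simp: ns'_def)
  obtain lH where lH: "lH > real s - 1" "FF s ns' lH = 1"
    using FF_root[OF s0 ne' p0'] by auto
  have eG: "largest_eigenvalue (distance_matrix (gjoin (complete_graph s) (union_cliques ns))) = lG"
    using lam_GG[OF s0 lG] unfolding GG_def .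
  have eH: "largest_eigenvalue (distance_matrix (gjoin (complete_graph s)
                (union_cliques ((n - s - p * (c - 1)) # replicate (c - 1) p)))) = lH"
    using lam_GG[OF s0 lH] unfolding GG_def ns'_def N_def .
  define L where "L = lH"
  have L0: "L \<ge> 0" using lH s0 by (simp add: L_def)
  define h where "h t = t / (L + t + 1)" for t :: real
  define K where "K = (L + 1) / ((L + real N + 1) * (L + real p + 1))"
  define A where "A = 2 + real s / (L - real s + 1)"
  have A0: "A > 0" using lH by (simp add: A_def L_def add_pos_nonneg)
  have FG: "FF s ns L = A * (\<Sum>k<c. h (real (ns ! k)))"
    unfolding FF_def A_def h_def len ..
  have FH: "FF s ns' L = A * (h (real N) + real (c - 1) * h (real p))"
  proof -
    have "(\<Sum>k<length ns'. real (ns' ! k) / (L + real (ns' ! k) + 1))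
        = h (real N) + (\<Sum>k<c'. h (real p))"
      unfolding ns'_def c' by (subst length_Cons, subst sum.lessThan_Suc_shift) (simp add: h_def)
    thus ?thesis unfolding FF_def A_def c' by simp
  qed
  have hN: "h (real N) = h (real p) + (real N - real p) * K"
    unfolding h_def K_def using chord_eq[OF L0, of "real p" "real N"] by simp
  have low: "h (real (ns ! k)) \<ge> h (real p) + (real (ns ! k) - real p) * K" if "k < c" for k
    unfolding h_def K_def using chord_ge[OF L0, of "real p" "real (ns ! k)" "real N"] gep[OF that] bnd[OF that]
    by simp
  have sumlow: "(\<Sum>k<c. h (real p) + (real (ns ! k) - real p) * K) = h (real N) + real (c - 1) * h (real p)"
  proof -
    have "(\<Sum>k<c. h (real p) + (real (ns ! k) - real p) * K) = real c * h (real p) + R * K"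
      unfolding R_def by (simp add: sum.distrib sum_distrib_right)
    also have "\<dots> = h (real N) + real (c - 1) * h (real p)"
    proof -
      have RN: "R = real N - real p" using R NR c' by (simp add: algebra_simps)
      show ?thesis unfolding hN RN using c' by (simp add: algebra_simps)
    qed
    finally show ?thesis .
  qed
  have maj: "FF s ns L \<ge> FF s ns' L"
  proof -
    have "(\<Sum>k<c. h (real (ns ! k))) \<ge> h (real N) + real (c - 1) * h (real p)"
      unfolding sumlow[symmetric] by (intro sum_mono low) auto
    thus ?thesis unfolding FG FH using A0 by simp
  qed
  have strict: "FF s ns L > FF s ns' L" if neq: "ns \<noteq> ns'"
  proof -
    have "\<exists>j. 0 < j \<and> j < c \<and> ns ! j > p"
    proof (rule ccontr)
      assume "\<not> (\<exists>j. 0 < j \<and> j < c \<and> ns ! j > p)"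
      hence allp0: "ns ! j \<le> p" if "0 < j" "j < c" for j using that by auto
      have allp: "ns ! j = p" if "0 < j" "j < c" for j
        using gep[of j] allp0[OF that] that by simp
      have "sum_list ns = (\<Sum>k<c. ns ! k)" using len by (simp add: sum_list_sum_nth atLeast0LessThan)
      also have "\<dots> = ns ! 0 + (\<Sum>k<c'. ns ! Suc k)" unfolding c' by (subst sum.lessThan_Suc_shift) simp
      also have "\<dots> = ns ! 0 + c' * p" using allp c' by simp
      finally have "ns ! 0 = N" using assms(10) c' by (simp add: N_def)
      hence "ns = ns'" using allp len c'
        by (intro nth_equalityI) (auto simp: ns'_def nth_Cons' )
      with neq show False by simp
    qed
    then obtain j where j: "0 < j" "j < c" "ns ! j > p" by blast
    have "R \<ge> (\<Sum>k\<in>{0, j}. real (ns ! k) - real p)" using j by (intro Rsub) auto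
    hence "real (ns ! j) < real N" using j assms(7) p0 NR R c' by (simp add: algebra_simps)
    hence jlt: "h (real (ns ! j)) > h (real p) + (real (ns ! j) - real p) * K"
      unfolding h_def K_def using chord_gt[OF L0, of "real p" "real (ns ! j)" "real N"] j by simp
    have "(\<Sum>k<c. h (real (ns ! k))) > h (real N) + real (c - 1) * h (real p)"
      unfolding sumlow[symmetric] using j jlt low by (intro sum_strict_mono_ex1) auto
    thus ?thesis unfolding FG FH using A0 by simp
  qed
  have ge: "lG \<ge> lH"
  proof (rule ccontr)
    assume "\<not> lG \<ge> lH"
    hence "FF s ns lH < FF s ns lG" using FF_strict_mono[OF s0 lG(1) _ ne] assms(6) c0 by auto
    thus False using maj lG lH by (simp add: L_def)
  qed
  have iff: "lG = lH \<longleftrightarrow> ns = ns'"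
  proof
    assume "lG = lH"
    thus "ns = ns'" using strict lG lH by (auto simp: L_def)
  next
    assume "ns = ns'"
    thus "lG = lH" using eG eH by (simp add: ns'_def N_def)
  qed
  show ?thesis unfolding eG eH using ge iff by (simp add: ns'_def N_def)
qed

end
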